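(* Let $(p_\omega)_{\omega\in\Omega}$ be a fixed probability distribution on the finite scenario set $\Omega$, and $\Phi_N(\mathbf{x})=\sum_{\omega\in\Omega}p_\omega Q_\omega(\mathbf{x})$. Let $\hat{\mathbf{x}}\in\mathcal{X}$ and for each $\omega\in\Omega$ let $\hat{\mathbf{S}}^\omega=(\hat S^\omega_1,\dots,\hat S^\omega_k)$ be an optimal solution of the problem defining $Q_\omega(\hat{\mathbf{x}})$. For each $\omega,q$ fix an ordering $\hat S^\omega_q=\{i^\omega_{q,1},\dots,i^\omega_{q,T^\omega_q}\}$ and for $1\le t\le T^\omega_q$ let $\hat{\mathbf{S}}^\omega_{q,(t)}=(\hat S^\omega_1,\dots,\hat S^\omega_{q-1},\{i^\omega_{q,1},\dots,i^\omega_{q,t-1}\},\emptyset,\dots,\emptyset)$. Then for every $\mathbf{x}\in\mathcal{X}$, $$\Phi_N(\mathbf{x})\;\ge\;\Phi_N(\hat{\mathbf{x}})-\sum_{q=1}^k\sum_{\omega\in\Omega}\sum_{t=1}^{T^\omega_q}p_\omega\,\rho^\omega_{q,i^\omega_{q,t}}(\hat{\mathbf{S}}^\omega_{q,(t)})\,\xi^\omega_{i^\omega_{q,t}}\,x_{q,i^\omega_{q,t}}.$$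
   Context: Let $n,k$ be positive integers and $N=\{1,\dots,n\}$. $\mathbb{X}(N,k)$ denotes the set of $k$-tuples $\mathbf{S}=(S_1,\dots,S_k)$ of pairwise disjoint subsets of $N$; such a tuple is identified with $\mathbf{s}\in\{0,1\}^{kn}$ where $s_{q,i}=1$ iff $i\in S_q$. For $\mathbf{X},\mathbf{Y}\in\mathbb{X}(N,k)$ let $\mathbf{X}\sqcap\mathbf{Y}=(X_1\cap Y_1,\dots,X_k\cap Y_k)$ and $\mathbf{X}\sqcup\mathbf{Y}$ be the tuple whose $i$-th component is $(X_i\cup Y_i)\setminus\bigcup_{q\ne i}(X_q\cup Y_q)$. A function $f:\mathbb{X}(N,k)\to\mathbb{R}$ is $k$-submodular if $f(\mathbf{X})+f(\mathbf{Y})\ge f(\mathbf{X}\sqcap\mathbf{Y})+f(\mathbf{X}\sqcup\mathbf{Y})$ for all $\mathbf{X},\mathbf{Y}$, and monotone if $f(\mathbf{X})\le f(\mathbf{Y})$ whenever $X_q\subseteq Y_q$ for all $q$. $\boldsymbol{\emptyset}=(\emptyset,\dots,\emptyset)$. Given nonnegative integer budgets $A_1,\dots,A_k$ and $D_1,\dots,D_k$, the attacker's feasible set is $\mathcal{X}=\{\mathbf{x}\in\{0,1\}^{kn}:\sum_{i=1}^n x_{q,i}\le A_q\ \forall q,\ \sum_{q=1}^k x_{q,i}\le 1\ \forall i\in N\}$. Stochastic setting: $\Omega$ is a finite set of scenarios; for each $\omega\in\Omega$ we are given $\xi^\omega\in\{0,1\}^n$ and a monotone $k$-submodular function $f^\omega:\mathbb{X}(N,k)\to\mathbb{R}$,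 with marginal gains $\rho^\omega_{q,i}(\mathbf{X})=f^\omega(X_1,\dots,X_q\cup\{i\},\dots,X_k)-f^\omega(\mathbf{X})$ for $i\notin\bigcup_r X_r$. For $\mathbf{x}\in\mathcal{X}$, $Q_\omega(\mathbf{x})=\max\{f^\omega(\mathbf{S}):\mathbf{S}\in\mathbb{X}(N,k),\ s_{q,i}\le 1-x_{q,i}\xi^\omega_i\ \forall q,i,\ \sum_{i=1}^n s_{q,i}\le D_q\ \forall q\}$. *)

theory Defs
  imports Complex_Main
begin

text \<open>A k-tuple of pairwise disjoint subsets of N = {1..n} is a function
  S :: nat \<Rightarrow> nat set with components S 1, ..., S k (and S q = {} for
  q outside {1..k}, so that tuples have a canonical representation).
  Element i belongs to component q iff s_{q,i} = 1.\<close>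

definition ktuples :: "nat \<Rightarrow> nat \<Rightarrow> (nat \<Rightarrow> nat set) set" where
  "ktuples n k = {S. (\<forall>q\<in>{1..k}. S q \<subseteq> {1..n}) \<and> (\<forall>q. q \<notin> {1..k} \<longrightarrow> S q = {})
     \<and> (\<forall>p\<in>{1..k}. \<forall>q\<in>{1..k}. p \<noteq> q \<longrightarrow> S p \<inter> S q = {})}"

definition kmeet :: "(nat \<Rightarrow> nat set) \<Rightarrow> (nat \<Rightarrow> nat set) \<Rightarrow> (nat \<Rightarrow> nat set)" where
  "kmeet X Y = (\<lambda>q. X q \<inter> Y q)"

definition kjoin :: "nat \<Rightarrow> (nat \<Rightarrow> nat set) \<Rightarrow> (nat \<Rightarrow> nat set) \<Rightarrow> (nat \<Rightarrow> nat set)" where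
  "kjoin k X Y = (\<lambda>q. (X q \<union> Y q) - (\<Union>r\<in>{1..k} - {q}. X r \<union> Y r))"

definition k_submodular :: "nat \<Rightarrow> nat \<Rightarrow> ((nat \<Rightarrow> nat set) \<Rightarrow> real) \<Rightarrow> bool" where
  "k_submodular n k f = (\<forall>X\<in>ktuples n k. \<forall>Y\<in>ktuples n k.
      f X + f Y \<ge> f (kmeet X Y) + f (kjoin k X Y))"

definition k_monotone :: "nat \<Rightarrow> nat \<Rightarrow> ((nat \<Rightarrow> nat set) \<Rightarrow> real) \<Rightarrow> bool" where
  "k_monotone n k f = (\<forall>X\<in>ktuples n k. \<forall>Y\<in>ktuples n k.
      (\<forall>q\<in>{1..k}. X q \<subseteq> Y q) \<longrightarrow> f X \<le> f Y)"

definition marg :: "((nat \<Rightarrow> nat set) \<Rightarrow> real) \<Rightarrow> nat \<Rightarrow> nat \<Rightarrow> (nat \<Rightarrow> nat set) \<Rightarrow> real" where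
  "marg f q i X = f (X(q := insert i (X q))) - f X"

definition attacker_feasible :: "nat \<Rightarrow> nat \<Rightarrow> (nat \<Rightarrow> nat) \<Rightarrow> (nat \<Rightarrow> nat \<Rightarrow> real) \<Rightarrow> bool" where
  "attacker_feasible n k A x = ((\<forall>q\<in>{1..k}. \<forall>i\<in>{1..n}. x q i \<in> {0, 1})
     \<and> (\<forall>q\<in>{1..k}. (\<Sum>i=1..n. x q i) \<le> real (A q))
     \<and> (\<forall>i\<in>{1..n}. (\<Sum>q=1..k. x q i) \<le> 1))"

definition defender_feasible :: "nat \<Rightarrow> nat \<Rightarrow> (nat \<Rightarrow> nat) \<Rightarrow> (nat \<Rightarrow> real)
    \<Rightarrow> (nat \<Rightarrow> nat \<Rightarrow> real) \<Rightarrow> (nat \<Rightarrow> nat set) set" where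
  "defender_feasible n k D xi x = {S \<in> ktuples n k.
      (\<forall>q\<in>{1..k}. \<forall>i\<in>{1..n}. (if i \<in> S q then 1 else 0) \<le> 1 - x q i * xi i)
      \<and> (\<forall>q\<in>{1..k}. card (S q) \<le> D q)}"

definition Qval :: "nat \<Rightarrow> nat \<Rightarrow> (nat \<Rightarrow> nat) \<Rightarrow> ((nat \<Rightarrow> nat set) \<Rightarrow> real) \<Rightarrow> (nat \<Rightarrow> real)
    \<Rightarrow> (nat \<Rightarrow> nat \<Rightarrow> real) \<Rightarrow> real" where
  "Qval n k D f xi x = Max (f ` defender_feasible n k D xi x)"

definition Phi :: "'w set \<Rightarrow> ('w \<Rightarrow> real) \<Rightarrow> nat \<Rightarrow> nat \<Rightarrow> (nat \<Rightarrow> nat)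
    \<Rightarrow> ('w \<Rightarrow> (nat \<Rightarrow> nat set) \<Rightarrow> real) \<Rightarrow> ('w \<Rightarrow> nat \<Rightarrow> real) \<Rightarrow> (nat \<Rightarrow> nat \<Rightarrow> real) \<Rightarrow> real" where
  "Phi \<Omega> p n k D f xi x = (\<Sum>\<omega>\<in>\<Omega>. p \<omega> * Qval n k D (f \<omega>) (xi \<omega>) x)"

definition prefix_tuple :: "(nat \<Rightarrow> nat set) \<Rightarrow> (nat \<Rightarrow> nat) \<Rightarrow> nat \<Rightarrow> nat \<Rightarrow> (nat \<Rightarrow> nat set)" where
  "prefix_tuple S ord q t = (\<lambda>r. if r < q then S r else if r = q then ord ` {1..<t} else {})"

end

theory Submission
  imports Defs
begin

lemma sub_ktuples:
  assumes "S \<in> ktuples n k" "\<forall>r. X r \<subseteq> S r"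
  shows "X \<in> ktuples n k"
  using assms unfolding ktuples_def by blast

lemma kt_disj:
  assumes "S \<in> ktuples n k" "r \<in> {1..k}"
  shows "S r - (\<Union>s\<in>{1..k} - {r}. S s) = S r"
  using assms unfolding ktuples_def by blast

lemma kt_sub: "S \<in> ktuples n k \<Longrightarrow> q \<in> {1..k} \<Longrightarrow> S q \<subseteq> {1..n}"
  unfolding ktuples_def by blast
lemma kt_out: "S \<in> ktuples n k \<Longrightarrow> q \<notin> {1..k} \<Longrightarrow> S q = {}"
  unfolding ktuples_def by blast
lemma kt_dis: "S \<in> ktuples n k \<Longrightarrow> p \<in> {1..k} \<Longrightarrow> q \<in> {1..k} \<Longrightarrow> p \<noteq> q \<Longrightarrow> S p \<inter> S q = {}"
  unfolding ktuples_def by blast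

lemma DR:
  assumes sub: "k_submodular n k g" and X: "X \<in> ktuples n k" and Y: "Y \<in> ktuples n k"
    and XY: "\<forall>r. X r \<subseteq> Y r" and i: "i \<in> {1..n}" and q: "q \<in> {1..k}"
    and ni: "\<forall>r. i \<notin> Y r"
  shows "marg g q i Y \<le> marg g q i X"
proof -
  let ?A = "X(q := insert i (X q))"
  let ?B = "Y(q := insert i (Y q))"
  have A: "?A \<in> ktuples n k" using X i q ni XY unfolding ktuples_def by auto
  have B: "?B \<in> ktuples n k" using Y i q ni unfolding ktuples_def by auto
  have m: "kmeet ?A Y = X" unfolding kmeet_def using XY ni by (auto simp: fun_eq_iff)
  have AY: "\<And>s. ?A s \<union> Y s = ?B s" using XY by auto
  have j: "kjoin k ?A Y = ?B"
  proof (rule ext)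
    fix r
    show "kjoin k ?A Y r = ?B r"
    proof (cases "r \<in> {1..k}")
      case True
      have "kjoin k ?A Y r = ?B r - (\<Union>s\<in>{1..k} - {r}. ?B s)"
        unfolding kjoin_def AY by simp
      then show ?thesis using kt_disj[OF B True] by simp
    next
      case False
      then have "X r = {}" "Y r = {}" "r \<noteq> q" using X Y q XY unfolding ktuples_def by auto
      then show ?thesis unfolding kjoin_def by auto
    qed
  qed
  have "g ?A + g Y \<ge> g (kmeet ?A Y) + g (kjoin k ?A Y)"
    using sub A Y unfolding k_submodular_def by blast
  then show ?thesis unfolding marg_def m j by simp
qed

lemma inner:
  fixes S :: "nat \<Rightarrow> nat set" and h :: "nat \<Rightarrow> nat"
  assumes sub: "k_submodular n k g" and S: "S \<in> ktuples n k" and q: "q \<in> {1..k}"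
    and bij: "bij_betw h {1..card (S q)} (S q)"
    and xs: "\<forall>i\<in>{1..n}. x q i \<in> {0,1}" and xis: "\<forall>i\<in>{1..n}. xi i \<in> {0,1}"
    and t1: "1 \<le> t" and t2: "t \<le> card (S q) + 1"
  shows "g (prefix_tuple S h q t) - g (\<lambda>r. prefix_tuple S h q t r \<inter> {i \<in> S r. x r i * xi i = 0})
    \<le> g (prefix_tuple S h q 1) - g (\<lambda>r. prefix_tuple S h q 1 r \<inter> {i \<in> S r. x r i * xi i = 0})
      + (\<Sum>s=1..<t. marg g q (h s) (prefix_tuple S h q s) * xi (h s) * x q (h s))"
  using t1 t2
proof (induct t rule: dec_induct)
  case base
  then show ?case by simp
next
  case (step m)
  define H where "H = prefix_tuple S h q"
  define S' where "S' = (\<lambda>r. {i \<in> S r. x r i * xi i = 0})"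
  define H' where "H' = (\<lambda>t r. H t r \<inter> S' r)"
  let ?T = "card (S q)"
  have m: "m \<in> {1..?T}" using step by auto
  define i where "i = h m"
  have iS: "i \<in> S q" using bij m unfolding i_def bij_betw_def by auto
  have iN: "i \<in> {1..n}" using iS kt_sub[OF S q] by blast
  have img: "h ` {1..<Suc m} = insert i (h ` {1..<m})"
    using step(1) unfolding i_def by (auto simp: atLeastLessThanSuc)
  have HS: "H (Suc m) = (H m)(q := insert i (H m q))"
    unfolding H_def prefix_tuple_def using img by (auto simp: fun_eq_iff)
  have sub1: "h ` {1..<m} \<subseteq> S q"
  proof -
    have "h ` {1..<m} \<subseteq> h ` {1..?T}" using m by auto
    also have "\<dots> = S q" using bij unfolding bij_betw_def by auto
    finally show ?thesis .
  qed
  have Hsub: "\<forall>r. H m r \<subseteq> S r" unfolding H_def prefix_tuple_def using sub1 by auto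
  have Hk: "H m \<in> ktuples n k" using sub_ktuples[OF S Hsub] .
  have H'k: "H' m \<in> ktuples n k" by (rule sub_ktuples[OF S]) (use Hsub in \<open>auto simp: H'_def\<close>)
  have ni: "\<forall>r. i \<notin> H m r"
  proof
    fix r
    show "i \<notin> H m r"
    proof (cases "r < q")
      case True
      show ?thesis
      proof (cases "r = 0")
        case True
        then have "S r = {}" using kt_out[OF S] by auto
        then show ?thesis using \<open>r < q\<close> unfolding H_def prefix_tuple_def by auto
      next
        case False
        then have "r \<in> {1..k}" using True q by auto
        then have "S r \<inter> S q = {}" using kt_dis[OF S _ q] True by auto
        then show ?thesis using True iS unfolding H_def prefix_tuple_def by auto
      qed
    next
      case False
      have "inj_on h {1..?T}" using bij unfolding bij_betw_def by auto
      then have "h m \<notin> h ` {1..<m}" using m by (subst inj_on_image_mem_iff[of h "{1..?T}"]) auto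
      then show ?thesis using False unfolding H_def prefix_tuple_def i_def by auto
    qed
  qed
  have xv: "x q i \<in> {0,1}" "xi i \<in> {0,1}" using xs xis iN by auto
  have e1: "g (H (Suc m)) = g (H m) + marg g q i (H m)" unfolding HS marg_def by simp
  have st: "g (H (Suc m)) - g (H' (Suc m)) \<le> g (H m) - g (H' m) + marg g q i (H m) * xi i * x q i"
  proof (cases "x q i * xi i = 0")
    case True
    then have iS': "i \<in> S' q" using iS unfolding S'_def by auto
    have H'S: "H' (Suc m) = (H' m)(q := insert i (H' m q))"
    proof (rule ext)
      fix r show "H' (Suc m) r = ((H' m)(q := insert i (H' m q))) r"
        by (cases "r = q") (simp_all add: H'_def HS iS')
    qed
    have e2: "g (H' (Suc m)) = g (H' m) + marg g q i (H' m)" unfolding H'S marg_def by simp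
    have d: "marg g q i (H m) \<le> marg g q i (H' m)"
      by (rule DR[OF sub H'k Hk _ iN q ni]) (auto simp: H'_def)
    have z: "marg g q i (H m) * xi i * x q i = 0" using True by auto
    show ?thesis using e1 e2 d z by linarith
  next
    case False
    then have o: "x q i = 1" "xi i = 1" using xv by auto
    have niS': "i \<notin> S' q" using False unfolding S'_def by auto
    have H'S: "H' (Suc m) = H' m"
    proof (rule ext)
      fix r show "H' (Suc m) r = H' m r"
        by (cases "r = q") (auto simp add: H'_def HS niS')
    qed
    show ?thesis using e1 H'S o by simp
  qed
  have IH: "g (H m) - g (H' m) \<le> g (H 1) - g (H' 1)
      + (\<Sum>s=1..<m. marg g q (h s) (prefix_tuple S h q s) * xi (h s) * x q (h s))"
    using step(3) m by (simp add: H'_def H_def S'_def)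
  have sm: "(\<Sum>s=1..<Suc m. marg g q (h s) (prefix_tuple S h q s) * xi (h s) * x q (h s))
     = (\<Sum>s=1..<m. marg g q (h s) (prefix_tuple S h q s) * xi (h s) * x q (h s))
       + marg g q i (H m) * xi i * x q i"
    using step(1) by (simp add: H_def i_def)
  have "g (H (Suc m)) - g (H' (Suc m)) \<le> g (H 1) - g (H' 1)
      + (\<Sum>s=1..<Suc m. marg g q (h s) (prefix_tuple S h q s) * xi (h s) * x q (h s))"
    using st IH sm by linarith
  then show ?case by (simp add: H'_def H_def S'_def)
qed

lemma scen:
  fixes S :: "nat \<Rightarrow> nat set" and h :: "nat \<Rightarrow> nat \<Rightarrow> nat"
  assumes sub: "k_submodular n k g" and S: "S \<in> ktuples n k"
    and bij: "\<forall>q\<in>{1..k}. bij_betw (h q) {1..card (S q)} (S q)"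
    and xs: "\<forall>q\<in>{1..k}. \<forall>i\<in>{1..n}. x q i \<in> {0,1}" and xis: "\<forall>i\<in>{1..n}. xi i \<in> {0,1}"
  shows "g S - g (\<lambda>r. {i \<in> S r. x r i * xi i = 0})
    \<le> (\<Sum>q=1..k. \<Sum>t=1..card (S q). marg g q (h q t) (prefix_tuple S (h q) q t) * xi (h q t) * x q (h q t))"
proof -
  define S' where "S' = (\<lambda>r. {i \<in> S r. x r i * xi i = 0})"
  define P where "P = (\<lambda>q. prefix_tuple S (h q) q 1)"
  define P' where "P' = (\<lambda>q r. P q r \<inter> S' r)"
  define F where "F = (\<lambda>q. \<Sum>t=1..card (S q). marg g q (h q t) (prefix_tuple S (h q) q t) * xi (h q t) * x q (h q t))"
  have main: "g (P j) - g (P' j) \<le> (\<Sum>q=1..<j. F q)" if "1 \<le> j" "j \<le> k + 1" for j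
    using that
  proof (induct j rule: dec_induct)
    case base
    have "P 1 = P' 1" using kt_out[OF S, of 0] unfolding P_def P'_def prefix_tuple_def by (auto simp: fun_eq_iff)
    then show ?case by simp
  next
    case (step m)
    have q: "m \<in> {1..k}" using step by auto
    let ?T = "card (S m)"
    have inn: "g (prefix_tuple S (h m) m (?T+1)) - g (\<lambda>r. prefix_tuple S (h m) m (?T+1) r \<inter> {i \<in> S r. x r i * xi i = 0})
      \<le> g (prefix_tuple S (h m) m 1) - g (\<lambda>r. prefix_tuple S (h m) m 1 r \<inter> {i \<in> S r. x r i * xi i = 0})
      + (\<Sum>s=1..<?T+1. marg g m (h m s) (prefix_tuple S (h m) m s) * xi (h m s) * x m (h m s))"
      by (rule inner[OF sub S q]) (use bij xs xis q in auto)
    have img: "h m ` {1..<?T+1} = S m" using bij q unfolding bij_betw_def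
      by (simp add: atLeastLessThanSuc_atLeastAtMost)
    have PS: "prefix_tuple S (h m) m (?T+1) = P (Suc m)"
    proof (rule ext)
      fix r show "prefix_tuple S (h m) m (?T+1) r = P (Suc m) r"
        by (cases "r < m"; cases "r = m") (use img in \<open>simp_all add: P_def prefix_tuple_def\<close>)
    qed
    have "g (P (Suc m)) - g (P' (Suc m)) \<le> g (P m) - g (P' m) + F m"
      using inn unfolding PS by (simp add: P_def P'_def S'_def F_def atLeastLessThanSuc_atLeastAtMost)
    moreover have "(\<Sum>q=1..<Suc m. F q) = (\<Sum>q=1..<m. F q) + F m" using step(1) by simp
    moreover have "g (P m) - g (P' m) \<le> (\<Sum>q=1..<m. F q)" using step(3) q by simp
    ultimately show ?case by linarith
  qed
  have PK: "P (k+1) = S"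
  proof (rule ext)
    fix r show "P (k+1) r = S r"
      using kt_out[OF S, of r] unfolding P_def prefix_tuple_def by auto
  qed
  have "g (P (k+1)) - g (P' (k+1)) \<le> (\<Sum>q=1..<k+1. F q)" by (rule main) auto
  moreover have "P' (k+1) = S'" unfolding P'_def PK S'_def by auto
  ultimately show ?thesis unfolding PK F_def S'_def by (simp add: atLeastLessThanSuc_atLeastAtMost)
qed

lemma finite_ktuples: "finite (ktuples n k)"
proof -
  have "ktuples n k \<subseteq> {f. \<forall>x. (x \<in> {1..k} \<longrightarrow> f x \<in> Pow {1..n}) \<and> (x \<notin> {1..k} \<longrightarrow> f x = {})}"
    using kt_sub kt_out by blast
  moreover have "finite {f. \<forall>x. (x \<in> {1..k} \<longrightarrow> f x \<in> Pow {1..n}) \<and> (x \<notin> {1..k} \<longrightarrow> f x = ({}::nat set))}"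
    by (rule finite_set_of_finite_funs) auto
  ultimately show ?thesis by (rule finite_subset)
qed

lemma finite_df: "finite (defender_feasible n k D xi x)"
  unfolding defender_feasible_def using finite_ktuples by simp

theorem theorem3:
  fixes n k :: nat and A D :: "nat \<Rightarrow> nat"
    and \<Omega> :: "'w set" and p :: "'w \<Rightarrow> real"
    and f :: "'w \<Rightarrow> (nat \<Rightarrow> nat set) \<Rightarrow> real" and xi :: "'w \<Rightarrow> nat \<Rightarrow> real"
    and xhat x :: "nat \<Rightarrow> nat \<Rightarrow> real"
    and Shat :: "'w \<Rightarrow> nat \<Rightarrow> nat set" and ord :: "'w \<Rightarrow> nat \<Rightarrow> nat \<Rightarrow> nat"
  assumes "n > 0" and "k > 0"
    and "finite \<Omega>" and "\<forall>\<omega>\<in>\<Omega>. p \<omega> \<ge> 0" and "(\<Sum>\<omega>\<in>\<Omega>. p \<omega>) = 1"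
    and "\<forall>\<omega>\<in>\<Omega>. \<forall>i\<in>{1..n}. xi \<omega> i \<in> {0, 1}"
    and "\<forall>\<omega>\<in>\<Omega>. k_monotone n k (f \<omega>) \<and> k_submodular n k (f \<omega>)"
    and "attacker_feasible n k A xhat"
    and "\<forall>\<omega>\<in>\<Omega>. Shat \<omega> \<in> defender_feasible n k D (xi \<omega>) xhat
            \<and> (\<forall>S\<in>defender_feasible n k D (xi \<omega>) xhat. f \<omega> S \<le> f \<omega> (Shat \<omega>))"
    and "\<forall>\<omega>\<in>\<Omega>. \<forall>q\<in>{1..k}. bij_betw (ord \<omega> q) {1..card (Shat \<omega> q)} (Shat \<omega> q)"
    and "attacker_feasible n k A x"
  shows "Phi \<Omega> p n k D f xi x \<ge> Phi \<Omega> p n k D f xi xhat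
     - (\<Sum>q=1..k. \<Sum>\<omega>\<in>\<Omega>. \<Sum>t=1..card (Shat \<omega> q).
          p \<omega> * marg (f \<omega>) q (ord \<omega> q t) (prefix_tuple (Shat \<omega>) (ord \<omega> q) q t)
            * xi \<omega> (ord \<omega> q t) * x q (ord \<omega> q t))"
proof -
  note a = assms
  define S' where "S' = (\<lambda>\<omega> r. {i \<in> Shat \<omega> r. x r i * xi \<omega> i = 0})"
  define B where "B = (\<lambda>\<omega>. \<Sum>q=1..k. \<Sum>t=1..card (Shat \<omega> q).
          marg (f \<omega>) q (ord \<omega> q t) (prefix_tuple (Shat \<omega>) (ord \<omega> q) q t)
            * xi \<omega> (ord \<omega> q t) * x q (ord \<omega> q t))"
  have xs: "\<forall>q\<in>{1..k}. \<forall>i\<in>{1..n}. x q i \<in> {0,1}" using a(11) unfolding attacker_feasible_def by blast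
  have per: "p \<omega> * Qval n k D (f \<omega>) (xi \<omega>) xhat - p \<omega> * B \<omega> \<le> p \<omega> * Qval n k D (f \<omega>) (xi \<omega>) x"
    if w: "\<omega> \<in> \<Omega>" for \<omega>
  proof -
    have Sh: "Shat \<omega> \<in> defender_feasible n k D (xi \<omega>) xhat" using a(9) w by blast
    have opt: "\<forall>S\<in>defender_feasible n k D (xi \<omega>) xhat. f \<omega> S \<le> f \<omega> (Shat \<omega>)" using a(9) w by blast
    have Sk: "Shat \<omega> \<in> ktuples n k" using Sh unfolding defender_feasible_def by blast
    have card: "\<forall>q\<in>{1..k}. card (Shat \<omega> q) \<le> D q" using Sh unfolding defender_feasible_def by blast
    have xis: "\<forall>i\<in>{1..n}. xi \<omega> i \<in> {0,1}" using a(6) w by blast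
    have sc: "f \<omega> (Shat \<omega>) - f \<omega> (S' \<omega>) \<le> B \<omega>"
      unfolding S'_def B_def
      by (rule scen) (use a(7) w Sk a(10) xs xis in auto)
    have S'k: "S' \<omega> \<in> ktuples n k" by (rule sub_ktuples[OF Sk]) (auto simp: S'_def)
    have S'f: "S' \<omega> \<in> defender_feasible n k D (xi \<omega>) x"
      unfolding defender_feasible_def
    proof (intro CollectI conjI ballI S'k)
      fix q assume q: "q \<in> {1..k}"
      have "finite (Shat \<omega> q)" using kt_sub[OF Sk q] finite_subset by blast
      then have "card (S' \<omega> q) \<le> card (Shat \<omega> q)" unfolding S'_def by (intro card_mono) auto
      moreover have "card (Shat \<omega> q) \<le> D q" using card q by blast
      ultimately show "card (S' \<omega> q) \<le> D q" by linarith
    next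
      fix q i assume q: "q \<in> {1..k}" and i: "i \<in> {1..n}"
      have "x q i \<in> {0,1}" "xi \<omega> i \<in> {0,1}" using xs xis q i by auto
      then show "(if i \<in> S' \<omega> q then 1 else 0) \<le> 1 - x q i * xi \<omega> i"
        unfolding S'_def by auto
    qed
    have Q1: "Qval n k D (f \<omega>) (xi \<omega>) x \<ge> f \<omega> (S' \<omega>)"
      unfolding Qval_def using S'f finite_df by (intro Max_ge) auto
    have Q2: "Qval n k D (f \<omega>) (xi \<omega>) xhat = f \<omega> (Shat \<omega>)"
      unfolding Qval_def using Sh opt finite_df by (intro Max_eqI) auto
    have "Qval n k D (f \<omega>) (xi \<omega>) xhat - B \<omega> \<le> Qval n k D (f \<omega>) (xi \<omega>) x"
      using Q1 Q2 sc by linarith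
    then have "p \<omega> * (Qval n k D (f \<omega>) (xi \<omega>) xhat - B \<omega>) \<le> p \<omega> * Qval n k D (f \<omega>) (xi \<omega>) x"
      using a(4) w by (intro mult_left_mono) auto
    then show ?thesis by (simp add: right_diff_distrib)
  qed
  have "(\<Sum>\<omega>\<in>\<Omega>. p \<omega> * Qval n k D (f \<omega>) (xi \<omega>) xhat - p \<omega> * B \<omega>) \<le> Phi \<Omega> p n k D f xi x"
    unfolding Phi_def by (rule sum_mono) (rule per)
  then have 1: "Phi \<Omega> p n k D f xi xhat - (\<Sum>\<omega>\<in>\<Omega>. p \<omega> * B \<omega>) \<le> Phi \<Omega> p n k D f xi x"
    unfolding Phi_def by (simp add: sum_subtractf)
  have 2: "(\<Sum>q=1..k. \<Sum>\<omega>\<in>\<Omega>. \<Sum>t=1..card (Shat \<omega> q).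
          p \<omega> * marg (f \<omega>) q (ord \<omega> q t) (prefix_tuple (Shat \<omega>) (ord \<omega> q) q t)
            * xi \<omega> (ord \<omega> q t) * x q (ord \<omega> q t)) = (\<Sum>\<omega>\<in>\<Omega>. p \<omega> * B \<omega>)"
    unfolding B_def by (subst sum.swap) (simp add: sum_distrib_left mult.assoc)
  show ?thesis using 1 2 by linarith
qed

end
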